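(* Let $d\ge2$, let $\mu\ge0$ be a finite measure with compact support in $\mathbb{R}^d$ and $\mu\ll\mathcal{L}^d$, let $\lambda,\varepsilon>0$, $p\ge1$, let $\varphi$ be a minimizer of $\mathcal{E}_\mu^{\lambda,\varepsilon,p}$ over $\mathcal{C}$, and let $t\in(0,L(\varphi))$. Then the mass projecting on $\{\varphi(t)\}$ in $\Gamma_\varphi$ is zero: $\mu\big(\pi_{\Gamma_\varphi}^{-1}(\{\varphi(t)\})\big)=0$.
   Context: $\mathcal{C}$ denotes the set of curves $\varphi:[0,a]\to\mathbb{R}^d$, $a\ge 0$, that are Lipschitz with $|\varphi'|=1$ a.e.; the length $L(\varphi)$ is its total variation, which equals $a$. $\Gamma_\varphi$ is the image of $\varphi$, $d(x,\Gamma)=\inf_{y\in\Gamma}|x-y|$, and $\kappa_\varphi=\varphi''$. The functional is $\mathcal{E}_\mu^{\lambda,\varepsilon,p}(\varphi)=\int d(x,\Gamma_\varphi)^p\,d\mu+\lambda L(\varphi)+\varepsilon\int_0^{L(\varphi)}|\kappa_\varphi|^2dt$ if $\varphi\in H^2([0,L(\varphi)];\mathbb{R}^d)\cap\mathcal{C}$ and $+\infty$ otherwise (a single-point curve has curvature term $0$). For a compact set $\Sigma$, $\Pi_\Sigma(x)=\{y\in\Sigma:|x-y|=d(x,\Sigma)\}$; when $\Pi_\Sigma(x)$ is a singleton $\{y\}$ one writes $\pi_\Sigma(x)=y$. For $B\subseteq\Sigma$, $\pi_\Sigma^{-1}(B):=\{x\in\mathbb{R}^d:\Pi_\Sigma(x)=\{y\}\text{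 for some }y\in B\}$, and $\mu(\pi_\Sigma^{-1}(B))$ is called the mass projecting on $B$ in $\Sigma$ (for $\mu\ll\mathcal{L}^d$ and $\Sigma$ a compact connected set of finite length, $\Pi_\Sigma(x)$ is a singleton for $\mu$-a.e. $x$). *)

theory Defs
  imports "HOL-Analysis.Analysis"
begin

text \<open>A curve is represented by its length a and a map phi :: real => 'a,
  of which only the restriction to [0,a] matters.\<close>

definition curve_class :: "real \<Rightarrow> (real \<Rightarrow> 'a::euclidean_space) \<Rightarrow> bool" where
  "curve_class a \<phi> \<longleftrightarrow> a \<ge> 0 \<and> (\<exists>C. lipschitz_on C {0..a} \<phi>) \<and>
     (AE t in lborel. t \<in> {0..a} \<longrightarrow>
        (\<exists>v. (\<phi> has_vector_derivative v) (at t within {0..a}) \<and> norm v = 1))"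

text \<open>H^2 on [0,a]: phi is the integral of an absolutely continuous phi1 whose
  derivative kappa is square integrable; kappa is then the second derivative.\<close>

definition H2_witness :: "real \<Rightarrow> (real \<Rightarrow> 'a::euclidean_space) \<Rightarrow> (real \<Rightarrow> 'a) \<Rightarrow> bool" where
  "H2_witness a \<phi> \<kappa> \<longleftrightarrow> \<kappa> \<in> borel_measurable lborel \<and>
     set_integrable lborel {0..a} \<kappa> \<and>
     set_integrable lborel {0..a} (\<lambda>s. norm (\<kappa> s) ^ 2) \<and>
     (\<exists>\<phi>1. set_integrable lborel {0..a} \<phi>1 \<and>
        (\<forall>t\<in>{0..a}. \<phi>1 t = \<phi>1 0 + (LINT s:{0..t}|lborel. \<kappa> s)) \<and>
        (\<forall>t\<in>{0..a}. \<phi> t = \<phi> 0 + (LINT s:{0..t}|lborel. \<phi>1 s)))"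

definition in_H2 :: "real \<Rightarrow> (real \<Rightarrow> 'a::euclidean_space) \<Rightarrow> bool" where
  "in_H2 a \<phi> \<longleftrightarrow> (\<exists>\<kappa>. H2_witness a \<phi> \<kappa>)"

definition curvature_energy :: "real \<Rightarrow> (real \<Rightarrow> 'a::euclidean_space) \<Rightarrow> real" where
  "curvature_energy a \<phi> =
     (LINT s:{0..a}|lborel. norm ((SOME \<kappa>. H2_witness a \<phi> \<kappa>) s) ^ 2)"

definition energy ::
  "'a::euclidean_space measure \<Rightarrow> real \<Rightarrow> real \<Rightarrow> real \<Rightarrow> real \<Rightarrow> (real \<Rightarrow> 'a) \<Rightarrow> ennreal" where
  "energy \<mu> lam eps p a \<phi> =
     (if curve_class a \<phi> \<and> in_H2 a \<phi> then
        (\<integral>\<^sup>+ x. ennreal (infdist x (\<phi> ` {0..a}) powr p) \<partial>\<mu>)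
        + ennreal (lam * a) + ennreal (eps * curvature_energy a \<phi>)
      else top)"

definition proj_preimage :: "'a::metric_space set \<Rightarrow> 'a set \<Rightarrow> 'a set" where
  "proj_preimage \<Sigma> B =
     {x. \<exists>y\<in>B. {z\<in>\<Sigma>. dist x z = infdist x \<Sigma>} = {y}}"

end

theory Submission
  imports Defs
begin

lemma const_curve: "curve_class 0 (\<lambda>_. (0::'a::euclidean_space))"
  unfolding curve_class_def
proof (intro conjI)
  show "\<exists>C. C-lipschitz_on {0..0} (\<lambda>_. (0::'a))" using lipschitz_on_constant by blast
  show "AE t in lborel. t \<in> {0..0::real} \<longrightarrow> (\<exists>v. ((\<lambda>_. 0::'a) has_vector_derivative v) (at t within {0..0}) \<and> norm v = 1)"
    using AE_lborel_singleton[of 0] by eventually_elim auto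
qed simp

lemma const_H2: "in_H2 0 (\<lambda>_. (0::'a::euclidean_space))"
  unfolding in_H2_def H2_witness_def
  by (rule exI[of _ "\<lambda>_. 0"], auto simp: set_integrable_def intro!: exI[of _ "\<lambda>_. 0"])

lemma const_energy_finite:
  fixes \<mu> :: "'a::euclidean_space measure"
  assumes "sets \<mu> = sets borel" "finite_measure \<mu>" "\<exists>K. compact K \<and> emeasure \<mu> (UNIV - K) = 0" "p \<ge> 1"
  shows "energy \<mu> lam eps p 0 (\<lambda>_. 0) < top"
proof -
  obtain K where K: "compact K" "emeasure \<mu> (UNIV - K) = 0" using assms(3) by blast
  then obtain R where R: "\<And>x. x \<in> K \<Longrightarrow> norm x \<le> R" by (meson bounded_iff compact_imp_bounded)
  have sK: "UNIV - K \<in> sets \<mu>" using assms(1) K(1) by (simp add: compact_imp_closed sets.compl_sets)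
  have AEK: "AE x in \<mu>. x \<in> K"
    by (rule AE_I'[of "UNIV - K"]) (use K(2) sK in auto)
  have "(\<integral>\<^sup>+ x. ennreal (infdist x ((\<lambda>_. 0::'a) ` {0..0::real}) powr p) \<partial>\<mu>)
      \<le> (\<integral>\<^sup>+ x. ennreal (max R 0 powr p) \<partial>\<mu>)"
  proof (rule nn_integral_mono_AE)
    show "AE x in \<mu>. ennreal (infdist x ((\<lambda>_. 0::'a) ` {0..0::real}) powr p) \<le> ennreal (max R 0 powr p)"
      using AEK
    proof eventually_elim
      case (elim x)
      have "infdist x ((\<lambda>_. 0::'a) ` {0..0::real}) = norm x"
        proof -
          have e: "(\<lambda>_. 0::'a) ` {0..0::real} = {0}" by auto
          show ?thesis unfolding e infdist_singleton by (simp add: dist_norm)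
        qed
      moreover have "norm x \<le> max R 0" using R[OF elim] by simp
      ultimately show ?case using assms(4) by (simp add: powr_mono2 ennreal_leI)
    qed
  qed
  also have "\<dots> < top"
    using finite_measure.emeasure_finite[OF assms(2), of "space \<mu>"]
    by (simp add: nn_integral_const ennreal_mult_less_top top.not_eq_extremum)
  finally show ?thesis using const_curve const_H2 unfolding energy_def
    by (simp add: ennreal_add_less_top)
qed

theorem corollary3p2:
  fixes \<mu> :: "'a::euclidean_space measure"
    and lam eps p a t :: real and \<phi> :: "real \<Rightarrow> 'a"
  assumes "DIM('a) \<ge> 2"
    and "sets \<mu> = sets borel"
    and "finite_measure \<mu>"
    and "\<exists>K. compact K \<and> emeasure \<mu> (UNIV - K) = 0"
    and "absolutely_continuous lborel \<mu>"
    and "lam > 0" and "eps > 0" and "p \<ge> 1"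
    and "curve_class a \<phi>"
    and "\<forall>b \<psi>. curve_class b \<psi> \<longrightarrow> energy \<mu> lam eps p a \<phi> \<le> energy \<mu> lam eps p b \<psi>"
    and "t \<in> {0<..<a}"
  shows "\<exists>N\<in>null_sets \<mu>. proj_preimage (\<phi> ` {0..a}) {\<phi> t} \<subseteq> N"
proof -
  have t0: "0 < t" "t < a" using assms(11) by auto
  have "energy \<mu> lam eps p a \<phi> < top"
    using assms(10)[rule_format, OF const_curve] const_energy_finite[OF assms(2,3,4,8), of lam eps]
    by (rule order.strict_trans1)
  then have "in_H2 a \<phi>"
  proof (rule contrapos_pp)
    assume "\<not> in_H2 a \<phi>"
    then have "energy \<mu> lam eps p a \<phi> = top" unfolding energy_def by simp
    then show "\<not> energy \<mu> lam eps p a \<phi> < top" by simp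
  qed
  then obtain \<kappa> \<phi>1 where ki: "set_integrable lborel {0..a} \<kappa>"
    and p1i: "set_integrable lborel {0..a} \<phi>1"
    and p1: "\<forall>s\<in>{0..a}. \<phi>1 s = \<phi>1 0 + (LINT u:{0..s}|lborel. \<kappa> u)"
    and p: "\<forall>s\<in>{0..a}. \<phi> s = \<phi> 0 + (LINT u:{0..s}|lborel. \<phi>1 u)"
    unfolding in_H2_def H2_witness_def by blast
  have p1': "\<phi>1 s = \<phi>1 0 + integral {0..s} \<kappa>" if "s \<in> {0..a}" for s
  proof -
    have "set_integrable lborel {0..s} \<kappa>"
      by (rule set_integrable_subset[OF ki]) (use that in auto)
    then have "(LINT u:{0..s}|lborel. \<kappa> u) = integral {0..s} \<kappa>"
      by (rule set_borel_integral_eq_integral(2))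
    then show ?thesis using p1[rule_format, OF that] by (simp only:)
  qed
  have p': "\<phi> s = \<phi> 0 + integral {0..s} \<phi>1" if "s \<in> {0..a}" for s
  proof -
    have "set_integrable lborel {0..s} \<phi>1"
      by (rule set_integrable_subset[OF p1i]) (use that in auto)
    then have "(LINT u:{0..s}|lborel. \<phi>1 u) = integral {0..s} \<phi>1"
      by (rule set_borel_integral_eq_integral(2))
    then show ?thesis using p[rule_format, OF that] by (simp only:)
  qed
  have cont: "continuous_on {0..a} \<phi>1"
  proof -
    have "continuous_on {0..a} (\<lambda>s. \<phi>1 0 + integral {0..s} \<kappa>)"
      using indefinite_integral_continuous_1[OF set_borel_integral_eq_integral(1)[OF ki]]
      by (intro continuous_intros)
    then show ?thesis by (rule continuous_on_eq) (metis p1')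
  qed
  have der: "(\<phi> has_vector_derivative \<phi>1 s) (at s)" if "0 < s" "s < a" for s
  proof -
    have "((\<lambda>s. \<phi> 0 + integral {0..s} \<phi>1) has_vector_derivative \<phi>1 s) (at s within {0..a})"
      using has_vector_derivative_add[OF has_vector_derivative_const[of "\<phi> 0"]
          integral_has_vector_derivative[OF cont, of s]] that
      by simp
    then have "(\<phi> has_vector_derivative \<phi>1 s) (at s within {0..a})"
      by (rule has_vector_derivative_transform[rotated 2]) (use that in simp, erule p')
    then show ?thesis using at_within_Icc_at[OF that] by simp
  qed
  have ae: "AE s in lborel. s \<in> {0<..<a} \<longrightarrow> norm (\<phi>1 s) = 1"
    using assms(9) unfolding curve_class_def
  proof (elim conjE)
    assume "AE t in lborel. t \<in> {0..a} \<longrightarrow> (\<exists>v. (\<phi> has_vector_derivative v) (at t within {0..a}) \<and> norm v = 1)"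
    then show ?thesis
    proof eventually_elim
      case (elim s)
      show ?case
      proof
        assume s: "s \<in> {0<..<a}"
        then obtain v where v: "(\<phi> has_vector_derivative v) (at s within {0..a})" "norm v = 1"
          using elim by auto
        have "v = \<phi>1 s" using v(1) der[of s] s at_within_Icc_at[of 0 s a]
          by (auto intro: vector_derivative_unique_at)
        then show "norm (\<phi>1 s) = 1" using v by simp
      qed
    qed
  qed
  have n1: "norm (\<phi>1 t) = 1"
  proof (rule ccontr)
    assume ne: "norm (\<phi>1 t) \<noteq> 1"
    have "isCont (\<lambda>s. norm (\<phi>1 s)) t"
      using cont t0 by (intro continuous_intros) (auto simp: continuous_on_interior)
    then have "eventually (\<lambda>s. norm (\<phi>1 s) \<noteq> 1) (at t)"
      using ne by (intro tendsto_imp_eventually_ne) (auto simp: isCont_def)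
    then obtain e where e0: "e > 0" and e1: "\<And>s. s \<noteq> t \<Longrightarrow> dist s t < e \<Longrightarrow> norm (\<phi>1 s) \<noteq> 1"
      unfolding eventually_at by blast
    have e: "e > 0" "\<And>s. dist s t < e \<Longrightarrow> norm (\<phi>1 s) \<noteq> 1"
      using e0 e1 ne by (auto, metis)
    define e' where "e' = min e (min t (a - t))"
    have e'p: "e' > 0" using e t0 by (simp add: e'_def)
    obtain N where N: "{s \<in> space lborel. \<not> (s \<in> {0<..<a} \<longrightarrow> norm (\<phi>1 s) = 1)} \<subseteq> N"
      "emeasure lborel N = 0" "N \<in> sets lborel" using ae by (rule AE_E)
    have "{t - e'<..<t + e'} \<subseteq> N"
    proof
      fix s assume "s \<in> {t - e'<..<t + e'}"
      then have "s \<in> {0<..<a}" "dist s t < e" unfolding e'_def dist_real_def by auto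
      then show "s \<in> N" using N(1) e(2) by auto
    qed
    then have "emeasure lborel {t - e'<..<t + e'} \<le> emeasure lborel N"
      by (rule emeasure_mono) (use N in auto)
    then show False using N(2) e'p by simp
  qed
  define v where "v = \<phi>1 t"
  define H where "H = {x. v \<bullet> x = v \<bullet> \<phi> t}"
  have "negligible H" unfolding H_def by (rule negligible_hyperplane) (use n1 v_def in auto)
  then have "H \<in> null_sets lebesgue" by (simp add: negligible_iff_null_sets)
  moreover have "H \<in> sets borel" unfolding H_def
    by (intro borel_closed closed_hyperplane)
  ultimately have "H \<in> null_sets lborel"
    using null_sets_completion_iff[of H lborel] by simp
  then have HN: "H \<in> null_sets \<mu>" using assms(5) unfolding absolutely_continuous_def by auto
  have "proj_preimage (\<phi> ` {0..a}) {\<phi> t} \<subseteq> H"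
  proof
    fix x assume "x \<in> proj_preimage (\<phi> ` {0..a}) {\<phi> t}"
    then have eq: "{z \<in> \<phi> ` {0..a}. dist x z = infdist x (\<phi> ` {0..a})} = {\<phi> t}"
      unfolding proj_preimage_def by auto
    then have dt: "dist x (\<phi> t) = infdist x (\<phi> ` {0..a})" by auto
    have le: "dist x (\<phi> t) \<le> dist x (\<phi> s)" if "s \<in> {0..a}" for s
      unfolding dt using that by (simp add: infdist_le)
    define g where "g s = (x - \<phi> s) \<bullet> (x - \<phi> s)" for s
    have d1: "((\<lambda>s. x - \<phi> s) has_derivative (\<lambda>h. - (h *\<^sub>R v))) (at t)"
      using has_derivative_diff[OF has_derivative_const[of x] der[OF t0, unfolded has_vector_derivative_def]]
      by (simp add: v_def)
    have "(g has_derivative (\<lambda>h. (x - \<phi> t) \<bullet> (- (h *\<^sub>R v)) + (- (h *\<^sub>R v)) \<bullet> (x - \<phi> t))) (at t)"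
      unfolding g_def by (rule has_derivative_inner[OF d1 d1])
    moreover have "(\<lambda>h. (x - \<phi> t) \<bullet> (- (h *\<^sub>R v)) + (- (h *\<^sub>R v)) \<bullet> (x - \<phi> t))
        = (*) (- 2 * ((x - \<phi> t) \<bullet> v))"
      by (auto simp: fun_eq_iff inner_commute algebra_simps)
    ultimately have gd: "(g has_real_derivative (- 2 * ((x - \<phi> t) \<bullet> v))) (at t)"
      unfolding has_field_derivative_def by simp
    have "- 2 * ((x - \<phi> t) \<bullet> v) = 0"
    proof (rule DERIV_local_min[OF gd, of "min t (a - t)"])
      show "0 < min t (a - t)" using t0 by simp
      show "\<forall>y. \<bar>t - y\<bar> < min t (a - t) \<longrightarrow> g t \<le> g y"
      proof (intro allI impI)
        fix y assume "\<bar>t - y\<bar> < min t (a - t)"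
        then have "y \<in> {0..a}" by auto
        then have "dist x (\<phi> t) \<le> dist x (\<phi> y)" by (rule le)
        then show "g t \<le> g y" unfolding g_def
          by (simp add: dist_norm power_mono flip: power2_norm_eq_inner)
      qed
    qed
    then show "x \<in> H" unfolding H_def by (simp add: inner_diff_right inner_commute)
  qed
  then show ?thesis using HN by blast
qed

end
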